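(* Let $q$ be a prime power and $n\ge 3$. There does not exist a Cameron-Liebler line class of $\mathrm{AG}(n,q)$ with parameter $x=2$.
   Context: $\mathrm{AG}(n,q)$ is $\mathrm{PG}(n,q)$ with a hyperplane $\pi_\infty$ removed; affine points are points outside $\pi_\infty$, affine lines are projective lines not contained in $\pi_\infty$. With $A_n$ the incidence matrix of affine points versus affine lines, a set $\mathcal{L}$ of affine lines is a Cameron-Liebler line class of $\mathrm{AG}(n,q)$ if its characteristic vector lies in the real row space $\mathrm{Im}(A_n^T)$; its parameter is $|\mathcal{L}|(q-1)/(q^n-1)$. *)

theory Defs
  imports Complex_Main
begin

text \<open>AG(n,q): points are functions 'n \<Rightarrow> 'k where 'k is a finite field of order q
  and n = card (UNIV :: 'n set). Affine lines are the sets {p + t d | t \<in> 'k} with d \<noteq> 0.\<close>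

definition affine_line :: "('n \<Rightarrow> 'k::field) \<Rightarrow> ('n \<Rightarrow> 'k) \<Rightarrow> ('n \<Rightarrow> 'k) set" where
  "affine_line p d = {(\<lambda>i. p i + t * d i) | t. True}"

definition affine_lines :: "('n::finite \<Rightarrow> 'k::field) set set" where
  "affine_lines = {affine_line p d | p d. \<exists>i. d i \<noteq> 0}"

text \<open>Characteristic vector of L (indexed by affine lines) lies in the real row space
  Im(A^T) of the point-line incidence matrix A: \<chi>_L = A^T y for some real vector y
  indexed by points, i.e. \<chi>_L(l) = \<Sum>_{P \<in> l} y(P).\<close>

definition is_CL_line_class :: "('n::finite \<Rightarrow> 'k::{finite,field}) set set \<Rightarrow> bool" where
  "is_CL_line_class L \<longleftrightarrow> L \<subseteq> affine_lines \<and>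
     (\<exists>y :: ('n \<Rightarrow> 'k) \<Rightarrow> real. \<forall>l \<in> affine_lines.
        (if l \<in> L then 1 else 0) = (\<Sum>P\<in>l. y P))"

definition CL_parameter :: "('n::finite \<Rightarrow> 'k::{finite,field}) set set \<Rightarrow> real" where
  "CL_parameter L = real (card L) * (real (card (UNIV :: 'k set)) - 1) / (real (card (UNIV :: 'k set)) ^ card (UNIV :: 'n set) - 1)"

end

theory Submission
  imports Defs "HOL-Library.Function_Algebras" "HOL-Library.Cardinality"
begin

definition sc :: "'a::field \<Rightarrow> ('b \<Rightarrow> 'a) \<Rightarrow> ('b \<Rightarrow> 'a)" where
  "sc c f = (\<lambda>i. c * f i)"

definition ebas :: "'b \<Rightarrow> 'b \<Rightarrow> 'a::field" where
  "ebas j = (\<lambda>i. if i = j then 1 else 0)"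

lemma sum_apply: "(sum f A) x = sum (\<lambda>a. f a x) A"
  by (induction A rule: infinite_finite_induct) (auto simp: zero_fun_def plus_fun_def)

lemma sc_apply[simp]: "sc c f i = c * f i" by (simp add: sc_def)

lemma vs_sc: "vector_space (sc :: 'a::field \<Rightarrow> ('b \<Rightarrow> 'a) \<Rightarrow> ('b \<Rightarrow> 'a))"
  by unfold_locales (auto simp: fun_eq_iff plus_fun_def algebra_simps)

interpretation V: finite_dimensional_vector_space "sc :: 'a::field \<Rightarrow> ('b::finite \<Rightarrow> 'a) \<Rightarrow> _"
  "range ebas"
proof -
  interpret vector_space "sc :: 'a::field \<Rightarrow> ('b::finite \<Rightarrow> 'a) \<Rightarrow> _" by (rule vs_sc)
  show "finite_dimensional_vector_space sc (range (ebas :: 'b \<Rightarrow> 'b \<Rightarrow> 'a))"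
  proof unfold_locales
    show "finite (range (ebas :: 'b \<Rightarrow> 'b \<Rightarrow> 'a))" by simp
    have inj: "inj (ebas :: 'b \<Rightarrow> 'b \<Rightarrow> 'a)"
      by (auto simp: inj_def ebas_def fun_eq_iff split: if_splits)
    show "independent (range (ebas :: 'b \<Rightarrow> 'b \<Rightarrow> 'a))"
    proof
      assume "dependent (range (ebas :: 'b \<Rightarrow> 'b \<Rightarrow> 'a))"
      then obtain u where u: "\<exists>v\<in>range ebas. u v \<noteq> 0" "(\<Sum>v\<in>range (ebas :: 'b \<Rightarrow> 'b \<Rightarrow> 'a). sc (u v) v) = 0"
        using dependent_finite[of "range ebas"] by auto
      have s: "(\<Sum>j\<in>UNIV. sc (u (ebas j)) (ebas j :: 'b \<Rightarrow> 'a)) = 0"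
        using u(2) by (simp add: sum.reindex[OF inj])
      have "u (ebas i) = 0" for i
      proof -
        have "(\<Sum>j\<in>UNIV. sc (u (ebas j)) (ebas j :: 'b \<Rightarrow> 'a)) i = 0" using s by (simp add: zero_fun_def)
        moreover have "\<And>a. u (ebas a) * (ebas a i :: 'a) = (if i = a then u (ebas i) else 0)"
          by (auto simp: ebas_def)
        ultimately show ?thesis by (simp add: sum_apply)
      qed
      then show False using u(1) by auto
    qed
    show "span (range (ebas :: 'b \<Rightarrow> 'b \<Rightarrow> 'a)) = UNIV"
    proof (rule set_eqI, simp)
      fix f :: "'b \<Rightarrow> 'a"
      have "f = (\<Sum>j\<in>UNIV. sc (f j) (ebas j))"
      proof
        fix i
        have "\<And>j. f j * (ebas j i :: 'a) = (if i = j then f i else 0)"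
          by (auto simp: ebas_def)
        then show "f i = (\<Sum>j\<in>UNIV. sc (f j) (ebas j)) i" by (simp add: sum_apply)
      qed
      also have "\<dots> \<in> span (range ebas)"
        by (intro span_sum span_scale span_base) auto
      finally show "f \<in> span (range ebas)" .
    qed
  qed
qed

lemma dim_UNIV_card: "V.dim (UNIV :: ('b::finite \<Rightarrow> 'a::field) set) = CARD('b)"
proof -
  have inj: "inj (ebas :: 'b \<Rightarrow> 'b \<Rightarrow> 'a)"
    by (auto simp: inj_def ebas_def fun_eq_iff split: if_splits)
  show ?thesis using card_image[OF inj] by simp
qed


lemma line_alt: "affine_line p d = {p + sc t d | t. True}"
  by (simp add: affine_line_def plus_fun_def sc_def)

lemma line_mem: "x \<in> affine_line p d \<longleftrightarrow> (\<exists>t. x = p + sc t d)"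
  by (auto simp: line_alt)

lemma line_self: "p \<in> affine_line p d"
  unfolding line_mem by (rule exI[of _ 0]) (simp add: fun_eq_iff)

lemma sc_add: "sc s d + sc t d = sc (s + t) d"
  by (simp add: fun_eq_iff algebra_simps)

lemma line_same: assumes "x \<in> affine_line p d" shows "affine_line x d = affine_line p d"
proof -
  obtain t where t: "x = p + sc t d" using assms line_mem by blast
  show ?thesis
  proof (rule set_eqI)
    fix z
    have "(\<exists>s. z = x + sc s d) \<longleftrightarrow> (\<exists>s. z = p + sc s d)"
    proof
      assume "\<exists>s. z = x + sc s d"
      then obtain s where "z = x + sc s d" by blast
      then have "z = p + sc (t + s) d" by (simp add: t add.assoc sc_add)
      then show "\<exists>s. z = p + sc s d" by blast
    next
      assume "\<exists>s. z = p + sc s d"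
      then obtain s where "z = p + sc s d" by blast
      then have "z = x + sc (s - t) d" by (simp add: t fun_eq_iff algebra_simps)
      then show "\<exists>s. z = x + sc s d" by blast
    qed
    then show "z \<in> affine_line x d \<longleftrightarrow> z \<in> affine_line p d" by (simp add: line_mem)
  qed
qed

lemma nz_iff: "(\<exists>i. d i \<noteq> 0) \<longleftrightarrow> d \<noteq> (0 :: 'n \<Rightarrow> 'k::zero)"
  by (auto simp: zero_fun_def fun_eq_iff)

lemma line_in_lines: "(d :: 'n::finite \<Rightarrow> 'k::field) \<noteq> 0 \<Longrightarrow> affine_line p d \<in> affine_lines"
proof -
  assume "d \<noteq> 0"
  then have "\<exists>i. d i \<noteq> 0" using nz_iff[of d] by blast
  then show ?thesis unfolding affine_lines_def by blast
qed

lemma lines_cases: assumes "l \<in> affine_lines"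
  obtains p d where "d \<noteq> 0" "l = affine_line p d"
proof -
  from assms obtain p d where "l = affine_line p d" "\<exists>i. d i \<noteq> 0"
    unfolding affine_lines_def by blast
  then show ?thesis using that nz_iff[of d] by blast
qed

definition D :: "('n \<Rightarrow> 'k::field) set \<Rightarrow> ('n \<Rightarrow> 'k) \<Rightarrow> ('n \<Rightarrow> 'k) set set" where
  "D F d = (\<lambda>p. affine_line p d) ` F"

definition closed_dir :: "('n \<Rightarrow> 'k::field) set \<Rightarrow> ('n \<Rightarrow> 'k) \<Rightarrow> bool" where
  "closed_dir F d \<longleftrightarrow> (\<forall>p\<in>F. \<forall>t. p + sc t d \<in> F)"

lemma partition_sum:
  fixes F :: "('n::finite \<Rightarrow> 'k::{finite,field}) set" and y :: "('n \<Rightarrow> 'k) \<Rightarrow> real"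
  assumes "closed_dir F d"
  shows "(\<Sum>l\<in>D F d. sum y l) = sum y F"
proof -
  have U: "\<Union>(D F d) = F"
  proof
    show "\<Union>(D F d) \<subseteq> F" using assms by (auto simp: D_def closed_dir_def line_mem)
    show "F \<subseteq> \<Union>(D F d)" using line_self by (auto simp: D_def)
  qed
  have disj: "\<forall>A\<in>D F d. \<forall>B\<in>D F d. A \<noteq> B \<longrightarrow> A \<inter> B = {}"
  proof (intro ballI impI)
    fix A B assume "A \<in> D F d" "B \<in> D F d" "A \<noteq> B"
    then obtain a b where ab: "A = affine_line a d" "B = affine_line b d" by (auto simp: D_def)
    show "A \<inter> B = {}"
    proof (rule ccontr)
      assume "A \<inter> B \<noteq> {}"
      then obtain x where "x \<in> A" "x \<in> B" by blast
      then have "A = affine_line x d" "B = affine_line x d" using line_same ab by metis+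
      then show False using \<open>A \<noteq> B\<close> by simp
    qed
  qed
  have "sum y (\<Union>(D F d)) = (sum \<circ> sum) y (D F d)"
    by (rule sum.Union_disjoint) (auto simp: disj)
  then show ?thesis using U by simp
qed

definition isCL where
  "isCL L y \<longleftrightarrow> L \<subseteq> affine_lines \<and>
     (\<forall>l \<in> affine_lines. (if l \<in> L then 1 else 0) = (\<Sum>P\<in>l. (y P :: real)))"

lemma count_lemma:
  fixes F :: "('n::finite \<Rightarrow> 'k::{finite,field}) set"
  assumes "isCL L y" "d \<noteq> 0" "closed_dir F d"
  shows "real (card (L \<inter> D F d)) = sum y F"
proof -
  have sub: "D F d \<subseteq> affine_lines" using line_in_lines[OF assms(2)] by (auto simp: D_def)
  have "real (card (L \<inter> D F d)) = (\<Sum>l\<in>D F d. if l \<in> L then 1 else 0)"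
    by (simp add: sum.If_cases Int_commute)
  also have "\<dots> = (\<Sum>l\<in>D F d. sum y l)"
  proof (rule sum.cong[OF refl])
    fix l assume "l \<in> D F d"
    then have "l \<in> affine_lines" using sub by blast
    then show "(if l \<in> L then 1 else 0) = sum y l" using assms(1) unfolding isCL_def by blast
  qed
  also have "\<dots> = sum y F" by (rule partition_sum[OF assms(3)])
  finally show ?thesis .
qed

definition flat :: "('n \<Rightarrow> 'k::field) \<Rightarrow> ('n \<Rightarrow> 'k) set \<Rightarrow> ('n \<Rightarrow> 'k) set" where
  "flat p W = (\<lambda>w. p + w) ` W"

lemma closed_flat:
  fixes S :: "('n::finite \<Rightarrow> 'k::{finite,field}) set"
  assumes "d \<in> V.span S" shows "closed_dir (flat p (V.span S)) d"
  unfolding closed_dir_def flat_def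
proof (intro ballI allI)
  fix x t assume "x \<in> (\<lambda>w. p + w) ` V.span S"
  then obtain w where w: "w \<in> V.span S" "x = p + w" by blast
  have "w + sc t d \<in> V.span S" by (intro V.span_add V.span_scale w assms)
  then show "x + sc t d \<in> (\<lambda>w. p + w) ` V.span S" using w by (auto simp: add.assoc)
qed

lemma closed_UNIV: "closed_dir UNIV d" by (simp add: closed_dir_def)


lemma sc_nz_inj: assumes "(d :: 'n \<Rightarrow> 'k::field) \<noteq> 0" "sc s d = sc t d" shows "s = t"
proof -
  obtain i where "d i \<noteq> 0" using assms(1) by (auto simp: fun_eq_iff)
  moreover have "s * d i = t * d i" using assms(2) by (metis sc_apply)
  ultimately show ?thesis by simp
qed

lemma sc_mult: "sc s (sc t d) = sc (s * t) d" by (simp add: fun_eq_iff)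

lemma D_univ_iff:
  fixes d :: "'n \<Rightarrow> 'k::field"
  assumes "d \<noteq> 0" "v \<noteq> 0"
  shows "affine_line p d \<in> D UNIV v \<longleftrightarrow> (\<exists>t. v = sc t d)"
proof
  assume "affine_line p d \<in> D UNIV v"
  then obtain a where a: "affine_line p d = affine_line a v" by (auto simp: D_def)
  have "p + sc 1 d \<in> affine_line p d" unfolding line_mem by blast
  then have "p \<in> affine_line a v" "p + sc 1 d \<in> affine_line a v"
    using a line_self[of p d] by auto
  then obtain s s' where ss: "p = a + sc s v" "p + sc 1 d = a + sc s' v" by (auto simp: line_mem)
  then have "sc 1 d = sc (s' - s) v" by (simp add: fun_eq_iff algebra_simps)
  then have e: "d = sc (s' - s) v" by (simp add: fun_eq_iff)
  then have "s' - s \<noteq> 0" using assms(1) by (auto simp: fun_eq_iff)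
  then have "v = sc (inverse (s' - s)) d" using e by (simp add: fun_eq_iff)
  then show "\<exists>t. v = sc t d" by blast
next
  assume "\<exists>t. v = sc t d"
  then obtain t where t: "v = sc t d" by blast
  then have "t \<noteq> 0" using assms(2) by (auto simp: fun_eq_iff)
  have "affine_line p d = affine_line p v"
  proof (rule set_eqI)
    fix z
    have "(\<exists>s. z = p + sc s d) \<longleftrightarrow> (\<exists>s. z = p + sc s v)"
    proof
      assume "\<exists>s. z = p + sc s d"
      then obtain s where "z = p + sc s d" by blast
      then have "z = p + sc (s / t) v" using \<open>t \<noteq> 0\<close> by (simp add: t fun_eq_iff)
      then show "\<exists>s. z = p + sc s v" by blast
    next
      assume "\<exists>s. z = p + sc s v"
      then obtain s where "z = p + sc s v" by blast
      then have "z = p + sc (s * t) d" by (simp add: t fun_eq_iff)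
      then show "\<exists>s. z = p + sc s d" by blast
    qed
    then show "z \<in> affine_line p d \<longleftrightarrow> z \<in> affine_line p v" by (simp add: line_mem)
  qed
  then show "affine_line p d \<in> D UNIV v" by (auto simp: D_def)
qed

lemma card_field_ge2: "CARD('k::{finite,field}) \<ge> 2"
proof -
  have "card {0::'k, 1} = 2" by simp
  moreover have "card {0::'k, 1} \<le> CARD('k)" by (rule card_mono) auto
  ultimately show ?thesis by simp
qed

lemma card_dirs:
  fixes d :: "'n::finite \<Rightarrow> 'k::{finite,field}"
  assumes "d \<noteq> 0"
  shows "card {v. v \<noteq> 0 \<and> affine_line p d \<in> D UNIV v} = CARD('k) - 1"
proof -
  have "{v. v \<noteq> 0 \<and> affine_line p d \<in> D UNIV v} = (\<lambda>t. sc t d) ` (UNIV - {0})"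
  proof (rule set_eqI)
    fix v
    have "v \<noteq> 0 \<and> (\<exists>t. v = sc t d) \<longleftrightarrow> v \<in> (\<lambda>t. sc t d) ` (UNIV - {0})"
    proof
      assume "v \<noteq> 0 \<and> (\<exists>t. v = sc t d)"
      then obtain t where "v = sc t d" "v \<noteq> 0" by blast
      then have "t \<noteq> 0" by (auto simp: fun_eq_iff)
      then show "v \<in> (\<lambda>t. sc t d) ` (UNIV - {0})" using \<open>v = sc t d\<close> by blast
    next
      assume "v \<in> (\<lambda>t. sc t d) ` (UNIV - {0})"
      then obtain t where "t \<noteq> 0" "v = sc t d" by blast
      moreover obtain i where "d i \<noteq> 0" using assms by (auto simp: fun_eq_iff)
      ultimately have "v i \<noteq> 0" by simp
      then show "v \<noteq> 0 \<and> (\<exists>t. v = sc t d)" using \<open>v = sc t d\<close> by (auto simp: fun_eq_iff)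
    qed
    then show "v \<in> {v. v \<noteq> 0 \<and> affine_line p d \<in> D UNIV v} \<longleftrightarrow> v \<in> (\<lambda>t. sc t d) ` (UNIV - {0})"
      using D_univ_iff[OF assms, of v p] by auto
  qed
  moreover have "inj_on (\<lambda>t. sc t d) (UNIV - {0})"
    using sc_nz_inj[OF assms] by (auto simp: inj_on_def)
  ultimately show ?thesis by (simp add: card_image)
qed

lemma double_count:
  assumes "finite A" "finite B"
  shows "(\<Sum>a\<in>A. card {b\<in>B. R a b}) = (\<Sum>b\<in>B. card {a\<in>A. R a b})"
proof -
  have "(\<Sum>a\<in>A. card {b\<in>B. R a b}) = (\<Sum>a\<in>A. \<Sum>b\<in>B. if R a b then 1 else 0)"
    using assms by (simp add: sum.If_cases Int_def)
  also have "\<dots> = (\<Sum>b\<in>B. \<Sum>a\<in>A. if R a b then 1 else 0)" by (rule sum.swap)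
  also have "\<dots> = (\<Sum>b\<in>B. card {a\<in>A. R a b})"
    using assms by (simp add: sum.If_cases Int_def)
  finally show ?thesis .
qed

lemma card_nonzero_vecs:
  "card (UNIV - {0 :: 'n::finite \<Rightarrow> 'k::{finite,field}}) = CARD('k) ^ CARD('n) - 1"
  by (simp add: card_Diff_subset card_fun)

lemma param_lemma:
  fixes L :: "('n::finite \<Rightarrow> 'k::{finite,field}) set set"
  assumes "isCL L y"
  shows "\<exists>c. (\<forall>v. v \<noteq> 0 \<longrightarrow> card (L \<inter> D UNIV v) = c) \<and> CL_parameter L = real c"
proof -
  define c where "c = card (L \<inter> D UNIV (1 :: 'n \<Rightarrow> 'k))"
  have one: "(1 :: 'n \<Rightarrow> 'k) \<noteq> 0" by (simp add: one_fun_def zero_fun_def fun_eq_iff)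
  have cv: "card (L \<inter> D UNIV v) = c" if "v \<noteq> 0" for v
  proof -
    have "real (card (L \<inter> D UNIV v)) = sum y UNIV" by (rule count_lemma[OF assms that closed_UNIV])
    moreover have "real c = sum y UNIV" unfolding c_def by (rule count_lemma[OF assms one closed_UNIV])
    ultimately show ?thesis by simp
  qed
  have Lsub: "L \<subseteq> affine_lines" using assms by (simp add: isCL_def)
  have "(\<Sum>l\<in>L. card {v\<in>UNIV - {0}. l \<in> D UNIV v}) = (\<Sum>v\<in>UNIV - {0}. card {l\<in>L. l \<in> D UNIV v})"
    by (rule double_count) auto
  moreover have "(\<Sum>l\<in>L. card {v\<in>UNIV - {0}. l \<in> D UNIV v}) = card L * (CARD('k) - 1)"
  proof -
    have "card {v\<in>UNIV - {0}. l \<in> D UNIV v} = CARD('k) - 1" if lL: "l \<in> L" for l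
    proof -
      obtain p d where "d \<noteq> 0" "l = affine_line p d"
        by (rule lines_cases[of l]) (use Lsub lL in auto)
      then show ?thesis using card_dirs[of d p] by (simp add: conj_commute)
    qed
    then show ?thesis by simp
  qed
  moreover have "(\<Sum>v\<in>UNIV - {0}. card {l\<in>L. l \<in> D UNIV v}) = c * (CARD('k) ^ CARD('n) - 1)"
  proof -
    have "card {l\<in>L. l \<in> D UNIV v} = c" if "v \<in> UNIV - {0}" for v
      using cv[of v] that by (simp add: Int_def)
    then show ?thesis using card_nonzero_vecs[where 'n='n and 'k='k] by simp
  qed
  ultimately have eq: "card L * (CARD('k) - 1) = c * (CARD('k) ^ CARD('n) - 1)" by simp
  have q2: "CARD('k) \<ge> 2" by (rule card_field_ge2)
  have "CARD('k) \<le> CARD('k) ^ CARD('n)"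
    by (rule self_le_power) (use q2 in auto)
  then have qn: "CARD('k) ^ CARD('n) \<ge> 2" using q2 by linarith
  have eqr: "real (card L) * (real CARD('k) - 1) = real c * (real CARD('k) ^ CARD('n) - 1)"
  proof -
    have "real (card L * (CARD('k) - 1)) = real (c * (CARD('k) ^ CARD('n) - 1))" using eq by simp
    then show ?thesis using q2 qn by (simp add: of_nat_diff)
  qed
  have pos: "real CARD('k) ^ CARD('n) - 1 \<noteq> 0"
  proof -
    have "real (CARD('k) ^ CARD('n)) \<ge> 2" using qn by linarith
    then show ?thesis by simp
  qed
  have "CL_parameter L = real c * (real CARD('k) ^ CARD('n) - 1) / (real CARD('k) ^ CARD('n) - 1)"
    unfolding CL_parameter_def using eqr by simp
  also have "\<dots> = real c" using pos by simp
  finally show ?thesis using cv by blast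
qed


lemma full:
  fixes L :: "('n::finite \<Rightarrow> 'k::{finite,field}) set set"
  assumes cl: "isCL L y" and two: "\<forall>v. v \<noteq> 0 \<longrightarrow> card (L \<inter> D UNIV v) = 2"
    and dS: "d \<in> V.span S" and d0: "d \<noteq> 0"
    and sub: "L \<inter> D UNIV d \<subseteq> D (flat p (V.span S)) d"
    and wS: "w \<in> V.span S" and w0: "w \<noteq> 0"
  shows "L \<inter> D UNIV w \<subseteq> D (flat p (V.span S)) w"
proof -
  define F where "F = flat p (V.span S)"
  have mono: "D F v \<subseteq> D UNIV v" for v by (auto simp: D_def)
  have "L \<inter> D F d = L \<inter> D UNIV d" using sub mono[of d] unfolding F_def by blast
  then have "real (card (L \<inter> D UNIV d)) = sum y F"
    using count_lemma[OF cl d0 closed_flat[OF dS, of p]] unfolding F_def by simp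
  then have sF: "sum y F = 2" using two d0 by simp
  have "real (card (L \<inter> D F w)) = sum y F"
    using count_lemma[OF cl w0 closed_flat[OF wS, of p]] unfolding F_def by simp
  then have c1: "card (L \<inter> D F w) = 2" using sF by simp
  have c2: "card (L \<inter> D UNIV w) = 2" using two w0 by simp
  have "L \<inter> D F w = L \<inter> D UNIV w"
    by (rule card_subset_eq) (use mono[of w] c1 c2 in auto)
  then show ?thesis unfolding F_def by blast
qed

lemma in_D: "a \<in> F \<Longrightarrow> affine_line a d \<in> D F d" by (auto simp: D_def)

lemma in_flat: "w \<in> W \<Longrightarrow> p + w \<in> flat p W" by (auto simp: flat_def)

lemma in_flat0: "(0::'n::finite \<Rightarrow> 'k::field) \<in> V.span S \<Longrightarrow> p \<in> flat p (V.span S)"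
  using in_flat[of 0 "V.span S" p] by simp

lemma flat_diff: "a \<in> flat p (V.span S) \<Longrightarrow> b \<in> flat p (V.span S) \<Longrightarrow>
   b - a \<in> V.span (S :: ('n::finite \<Rightarrow> 'k::field) set)"
  by (auto simp: flat_def intro: V.span_diff)

lemma two_lines:
  fixes L :: "('n::finite \<Rightarrow> 'k::{finite,field}) set set"
  assumes "card (L \<inter> D F d) = 2"
  obtains a b where "a \<in> F" "b \<in> F" "affine_line a d \<noteq> affine_line b d"
    "L \<inter> D F d = {affine_line a d, affine_line b d}"
proof -
  obtain l1 l2 where l: "L \<inter> D F d = {l1, l2}" "l1 \<noteq> l2" using assms card_2_iff by metis
  then have "l1 \<in> D F d" "l2 \<in> D F d" by auto
  then obtain a b where "a \<in> F" "b \<in> F" "l1 = affine_line a d" "l2 = affine_line b d"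
    by (auto simp: D_def)
  then show ?thesis using that l by blast
qed

lemma not_in_line_span:
  fixes a b :: "'n::finite \<Rightarrow> 'k::field"
  assumes "affine_line a d \<noteq> affine_line b d"
  shows "b - a \<notin> V.span {d}"
proof
  assume "b - a \<in> V.span {d}"
  then obtain t where "b - a = sc t d" by (auto simp: V.span_singleton)
  then have "b = a + sc t d" by (simp add: algebra_simps)
  then have "b \<in> affine_line a d" by (auto simp: line_mem)
  then show False using line_same assms by metis
qed

lemma dim2:
  fixes u d :: "'n::finite \<Rightarrow> 'k::field"
  assumes "u \<notin> V.span {d}" "d \<noteq> 0"
  shows "V.dim (V.span {u, d}) = 2"
  using assms by (simp add: V.dim_insert)


theorem theorem6p8:
  fixes L :: "('n::finite \<Rightarrow> 'k::{finite,field}) set set"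
  assumes "card (UNIV :: 'n set) \<ge> 3"
      and "is_CL_line_class L"
  shows "CL_parameter L \<noteq> 2"
proof
  assume par: "CL_parameter L = 2"
  obtain y where cl: "isCL L y" using assms(2) unfolding is_CL_line_class_def isCL_def by blast
  obtain c where c: "\<forall>v. v \<noteq> 0 \<longrightarrow> card (L \<inter> D UNIV v) = c" "CL_parameter L = real c"
    using param_lemma[OF cl] by blast
  have "c = 2" using c(2) par by simp
  then have two: "\<forall>v. v \<noteq> 0 \<longrightarrow> card (L \<inter> D UNIV v) = 2" using c(1) by simp
  define d0 :: "'n \<Rightarrow> 'k" where "d0 = 1"
  have d00: "d0 \<noteq> 0" by (simp add: d0_def one_fun_def zero_fun_def fun_eq_iff)
  obtain p1 p2 where p: "affine_line p1 d0 \<noteq> affine_line p2 d0"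
    "L \<inter> D UNIV d0 = {affine_line p1 d0, affine_line p2 d0}"
    using two_lines[of L UNIV d0] two d00 by auto
  define u where "u = p2 - p1"
  have u: "u \<notin> V.span {d0}" unfolding u_def by (rule not_in_line_span[OF p(1)])
  define W0 where "W0 = V.span {u, d0}"
  have dimW0: "V.dim W0 = 2" unfolding W0_def by (rule dim2[OF u d00])
  have p2u: "p2 = p1 + u" by (simp add: u_def)
  have d0W0: "d0 \<in> V.span {u, d0}" by (simp add: V.span_base)
  have "p1 \<in> flat p1 (V.span {u, d0})" by (rule in_flat0) (simp add: V.span_zero)
  then have l1: "affine_line p1 d0 \<in> D (flat p1 (V.span {u, d0})) d0" by (rule in_D)
  have "p2 \<in> flat p1 (V.span {u, d0})" unfolding p2u by (rule in_flat) (simp add: V.span_base)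
  then have l2: "affine_line p2 d0 \<in> D (flat p1 (V.span {u, d0})) d0" by (rule in_D)
  have sub0: "L \<inter> D UNIV d0 \<subseteq> D (flat p1 (V.span {u, d0})) d0"
    unfolding p(2) using l1 l2 by simp
  have full0: "L \<inter> D UNIV w \<subseteq> D (flat p1 W0) w" if "w \<in> W0" "w \<noteq> 0" for w
    using full[OF cl two d0W0 d00 sub0, of w] that unfolding W0_def by simp
  obtain e where e: "e \<notin> W0"
  proof -
    have "W0 \<noteq> UNIV"
    proof
      assume "W0 = UNIV"
      then have "V.dim (UNIV :: ('n \<Rightarrow> 'k) set) = 2" using dimW0 by simp
      then show False using dim_UNIV_card[where 'b='n and 'a='k] assms(1) by simp
    qed
    then show ?thesis using that by blast
  qed
  have e0: "e \<noteq> 0" using e V.span_zero unfolding W0_def by metis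
  define W1 where "W1 = V.span {e, u, d0}"
  have W01: "W0 \<subseteq> W1" unfolding W0_def W1_def by (rule V.span_mono) auto
  have dimW1: "V.dim W1 \<le> 3"
  proof -
    have "V.dim W1 \<le> card {e, u, d0}" unfolding W1_def by (rule V.dim_le_card) auto
    also have "\<dots> \<le> 3" by (auto simp: card_insert_if)
    finally show ?thesis .
  qed
  have d0W1: "d0 \<in> V.span {e, u, d0}" by (simp add: V.span_base)
  have "p1 \<in> flat p1 (V.span {e, u, d0})" by (rule in_flat0) (simp add: V.span_zero)
  then have l1': "affine_line p1 d0 \<in> D (flat p1 (V.span {e, u, d0})) d0" by (rule in_D)
  have "p2 \<in> flat p1 (V.span {e, u, d0})" unfolding p2u by (rule in_flat) (simp add: V.span_base)
  then have l2': "affine_line p2 d0 \<in> D (flat p1 (V.span {e, u, d0})) d0" by (rule in_D)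
  have sub1: "L \<inter> D UNIV d0 \<subseteq> D (flat p1 (V.span {e, u, d0})) d0"
    unfolding p(2) using l1' l2' by simp
  have full1: "L \<inter> D UNIV w \<subseteq> D (flat p1 W1) w" if "w \<in> W1" "w \<noteq> 0" for w
    using full[OF cl two d0W1 d00 sub1, of w] that unfolding W1_def by simp
  have "card (L \<inter> D (flat p1 W1) e) = 2"
  proof -
    have "L \<inter> D (flat p1 W1) e = L \<inter> D UNIV e"
      using full1[of e] e0 by (auto simp: W1_def V.span_base D_def)
    then show ?thesis using two e0 by simp
  qed
  then obtain r1 r2 where r: "r1 \<in> flat p1 W1" "r2 \<in> flat p1 W1"
    "affine_line r1 e \<noteq> affine_line r2 e"
    "L \<inter> D (flat p1 W1) e = {affine_line r1 e, affine_line r2 e}"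
    by (rule two_lines)
  define u' where "u' = r2 - r1"
  have u': "u' \<notin> V.span {e}" unfolding u'_def by (rule not_in_line_span[OF r(3)])
  have u'W1: "u' \<in> W1" unfolding u'_def W1_def by (rule flat_diff) (use r in \<open>auto simp: W1_def\<close>)
  define W2 where "W2 = V.span {u', e}"
  have dimW2: "V.dim W2 = 2" unfolding W2_def by (rule dim2[OF u' e0])
  have r2u: "r2 = r1 + u'" by (simp add: u'_def)
  have eW2: "e \<in> V.span {u', e}" by (simp add: V.span_base)
  have "r1 \<in> flat r1 (V.span {u', e})" by (rule in_flat0) (simp add: V.span_zero)
  then have m1: "affine_line r1 e \<in> D (flat r1 (V.span {u', e})) e" by (rule in_D)
  have "r2 \<in> flat r1 (V.span {u', e})" unfolding r2u by (rule in_flat) (simp add: V.span_base)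
  then have m2: "affine_line r2 e \<in> D (flat r1 (V.span {u', e})) e" by (rule in_D)
  have eqe: "L \<inter> D UNIV e = L \<inter> D (flat p1 W1) e"
    using full1[of e] e0 by (auto simp: W1_def V.span_base D_def)
  have sub2: "L \<inter> D UNIV e \<subseteq> D (flat r1 (V.span {u', e})) e"
    unfolding eqe r(4) using m1 m2 by simp
  have full2: "L \<inter> D UNIV w \<subseteq> D (flat r1 W2) w" if "w \<in> W2" "w \<noteq> 0" for w
    using full[OF cl two eW2 e0 sub2, of w] that unfolding W2_def by simp
  have eW1: "e \<in> W1" unfolding W1_def by (rule V.span_base) simp
  have W21: "W2 \<subseteq> W1"
  proof -
    have "{u', e} \<subseteq> W1" using u'W1 eW1 by blast
    moreover have "V.subspace W1" unfolding W1_def by (rule V.subspace_span)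
    ultimately show ?thesis unfolding W2_def by (rule V.span_minimal)
  qed
  have sumsub: "{x + y |x y. x \<in> W0 \<and> y \<in> W2} \<subseteq> W1"
  proof
    fix z assume "z \<in> {x + y |x y. x \<in> W0 \<and> y \<in> W2}"
    then obtain x y where xy: "z = x + y" "x \<in> W0" "y \<in> W2" by blast
    have "x \<in> W1" "y \<in> W1" using xy W01 W21 by (simp_all add: subsetD)
    then show "z \<in> W1" unfolding xy(1) W1_def by (rule V.span_add)
  qed
  have "V.dim {x + y |x y. x \<in> W0 \<and> y \<in> W2} + V.dim (W0 \<inter> W2) = V.dim W0 + V.dim W2"
    unfolding W0_def W2_def by (rule V.dim_sums_Int) (rule V.subspace_span)+
  moreover have "V.dim {x + y |x y. x \<in> W0 \<and> y \<in> W2} \<le> V.dim W1"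
    by (rule V.dim_subset[OF sumsub])
  ultimately have "V.dim (W0 \<inter> W2) \<noteq> 0" using dimW0 dimW2 dimW1 by linarith
  then have "\<not> (W0 \<inter> W2 \<subseteq> {0})" by (simp only: V.dim_eq_0 simp_thms)
  then obtain f where f: "f \<in> W0" "f \<in> W2" "f \<noteq> 0" by blast
  have "card (L \<inter> D UNIV f) = 2" using two f(3) by simp
  then obtain a b where ab: "affine_line a f \<noteq> affine_line b f"
    "L \<inter> D UNIV f = {affine_line a f, affine_line b f}"
    by (rule two_lines)
  have both: "\<exists>a'. a' \<in> flat p1 W0 \<and> a' \<in> flat r1 W2 \<and> affine_line a' f = affine_line a f"
    if aL: "affine_line a f \<in> L" for a
  proof -
    have aU: "affine_line a f \<in> L \<inter> D UNIV f" using aL in_D[of a UNIV f] by simp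
    have "affine_line a f \<in> D (flat p1 W0) f" using full0[OF f(1) f(3)] aU by (rule subsetD)
    then obtain a1 where a1: "a1 \<in> flat p1 W0" "affine_line a f = affine_line a1 f" by (auto simp: D_def)
    have "affine_line a f \<in> D (flat r1 W2) f" using full2[OF f(2) f(3)] aU by (rule subsetD)
    then obtain a2 where a2: "a2 \<in> flat r1 W2" "affine_line a f = affine_line a2 f" by (auto simp: D_def)
    have "a1 \<in> affine_line a2 f" using a1(2) a2(2) line_self[of a1 f] by simp
    then obtain t where "a1 = a2 + sc t f" by (auto simp: line_mem)
    then have "a1 \<in> flat r1 W2"
      using closed_flat[of f "{u', e}" r1] f(2) a2(1) unfolding W2_def closed_dir_def by blast
    then show ?thesis using a1 by blast
  qed
  obtain a1 where a1: "a1 \<in> flat p1 W0" "a1 \<in> flat r1 W2" "affine_line a1 f = affine_line a f"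
    using both[of a] ab(2) by blast
  obtain b1 where b1: "b1 \<in> flat p1 W0" "b1 \<in> flat r1 W2" "affine_line b1 f = affine_line b f"
    using both[of b] ab(2) by blast
  define g where "g = b1 - a1"
  have gW0: "g \<in> W0" unfolding g_def W0_def by (rule flat_diff) (use a1(1) b1(1) in \<open>simp_all add: W0_def\<close>)
  have gW2: "g \<in> W2" unfolding g_def W2_def by (rule flat_diff) (use a1(2) b1(2) in \<open>simp_all add: W2_def\<close>)
  have g: "g \<notin> V.span {f}" unfolding g_def by (rule not_in_line_span) (use a1(3) b1(3) ab(1) in simp)
  have g0: "g \<noteq> 0" using g V.span_zero by metis
  have fg: "f \<notin> V.span {g}"
  proof
    assume "f \<in> V.span {g}"
    then obtain t where t: "f = sc t g" by (auto simp: V.span_singleton)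
    then have "t \<noteq> 0" using f(3) by (auto simp: fun_eq_iff)
    then have "g = sc (inverse t) f" using t by (simp add: fun_eq_iff)
    then have "g \<in> V.span {f}" by (simp add: V.span_scale V.span_base)
    then show False using g by simp
  qed
  have fneg: "f \<noteq> g" using g V.span_base[of f "{f}"] by auto
  have ind: "V.independent {f, g}"
    using fg fneg g0 by (simp add: V.independent_insert)
  have "W2 \<subseteq> V.span {f, g}"
  proof (rule V.card_ge_dim_independent)
    show "{f, g} \<subseteq> W2" using f gW2 by auto
    show "V.independent {f, g}" by (rule ind)
    show "V.dim W2 \<le> card {f, g}" using dimW2 fneg by simp
  qed
  moreover have "V.span {f, g} \<subseteq> W0"
    unfolding W0_def by (rule V.span_minimal) (use f gW0 W0_def in auto)
  moreover have "e \<in> W2" unfolding W2_def by (simp add: V.span_base)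
  ultimately show False using e by blast
qed

end
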